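(* Let $\phi, \phi' \in L^1(\mathbb{R}_+)$ with $\int_0^\infty\phi = \int_0^\infty\phi' = 1$, and let $I_{\phi}$ and $I_{\phi'}$ be the closed ideals in $L^1(\mathbb{R})$ generated by $\tilde{\phi}$ and $\tilde{\phi'}$ respectively. If $I_{\phi} \subseteq I_{\phi'}$, then $S_{\phi}$ is stronger than $S_{\phi'}$.
   Context: $\mathbb{R}_+ = [0,\infty)$; functions are complex-valued. $S_{\phi}(f) = \lim_{x\to\infty}\int_0^x f(t)\phi(x-t)\,dt$ for $f\in L^\infty(\mathbb{R}_+)$, with domain $\mathcal{D}(S_\phi)$ the set of $f$ for which the limit exists. $S$ is stronger than $S'$ if $\mathcal{D}(S')\subseteq\mathcal{D}(S)$ and $S = S'$ on $\mathcal{D}(S')$. $\tilde{\phi}\in L^1(\mathbb{R})$ equals $\phi$ on $[0,\infty)$ and $0$ on $(-\infty,0)$; $L^1(\mathbb{R})$ is the convolution Banach algebra. *)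

theory Defs
  imports "HOL-Analysis.Analysis"
begin

definition ext0 :: "(real \<Rightarrow> complex) \<Rightarrow> real \<Rightarrow> complex" where
  "ext0 \<phi> x = (if 0 \<le> x then \<phi> x else 0)"

definition conv :: "(real \<Rightarrow> complex) \<Rightarrow> (real \<Rightarrow> complex) \<Rightarrow> real \<Rightarrow> complex" where
  "conv f g x = (\<integral>y. f (x - y) * g y \<partial>lborel)"

definition L1_dist :: "(real \<Rightarrow> complex) \<Rightarrow> (real \<Rightarrow> complex) \<Rightarrow> real" where
  "L1_dist f g = (\<integral>x. norm (f x - g x) \<partial>lborel)"

text \<open>A closed ideal of the convolution algebra L1(R), represented as a set of integrable
  functions (closedness in the L1 norm makes it automatically closed under a.e. equality).\<close>
definition is_closed_ideal :: "(real \<Rightarrow> complex) set \<Rightarrow> bool" where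
  "is_closed_ideal I \<longleftrightarrow>
     (\<forall>f\<in>I. integrable lborel f) \<and>
     (\<forall>f\<in>I. \<forall>g\<in>I. (\<lambda>x. f x + g x) \<in> I) \<and>
     (\<forall>f\<in>I. \<forall>c. (\<lambda>x. c * f x) \<in> I) \<and>
     (\<forall>f\<in>I. \<forall>h. integrable lborel h \<longrightarrow> conv f h \<in> I) \<and>
     (\<forall>F f. (\<forall>n::nat. F n \<in> I) \<and> integrable lborel f \<and>
            (\<lambda>n. L1_dist (F n) f) \<longlonglongrightarrow> 0 \<longrightarrow> f \<in> I)"

definition closed_ideal_gen :: "(real \<Rightarrow> complex) \<Rightarrow> (real \<Rightarrow> complex) set" where
  "closed_ideal_gen g = \<Inter>{I. is_closed_ideal I \<and> g \<in> I}"

definition Linf_pos :: "(real \<Rightarrow> complex) set" where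
  "Linf_pos = {f. f \<in> borel_measurable lborel \<and>
                  (\<exists>B. AE x in lborel. 0 \<le> x \<longrightarrow> norm (f x) \<le> B)}"

text \<open>S_phi(f) = L, i.e. f is in the domain of S_phi and its value is L.\<close>
definition summ :: "(real \<Rightarrow> complex) \<Rightarrow> (real \<Rightarrow> complex) \<Rightarrow> complex \<Rightarrow> bool" where
  "summ \<phi> f L \<longleftrightarrow>
     ((\<lambda>x. LINT t:{0..x}|lborel. f t * \<phi> (x - t)) \<longlongrightarrow> L) at_top"

definition stronger :: "(real \<Rightarrow> complex) \<Rightarrow> (real \<Rightarrow> complex) \<Rightarrow> bool" where
  "stronger \<phi> \<phi>' \<longleftrightarrow> (\<forall>f\<in>Linf_pos. \<forall>L. summ \<phi>' f L \<longrightarrow> summ \<phi> f L)"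

end

theory Submission
  imports Defs
begin

lemma shift_integrable:
  fixes k :: "real \<Rightarrow> complex"
  assumes "integrable lborel k" shows "integrable lborel (\<lambda>t. k (x - t))"
  using lborel_integrable_real_affine[OF assms, of "-1" x] by simp

lemma shift_integral:
  fixes k :: "real \<Rightarrow> 'a::{banach, second_countable_topology}"
  shows "(\<integral>t. k (x - t) \<partial>lborel) = (\<integral>t. k t \<partial>lborel)"
  using lborel_integral_real_affine[of "-1" k x] by simp

lemma shift_integral':
  fixes k :: "real \<Rightarrow> 'a::{banach, second_countable_topology}"
  shows "(\<integral>t. k (t - y) \<partial>lborel) = (\<integral>t. k t \<partial>lborel)"
  using lborel_integral_real_affine[of "1" k "-y"] by simp

lemma shift_integrable':
  fixes k :: "real \<Rightarrow> complex"
  assumes "integrable lborel k" shows "integrable lborel (\<lambda>t. k (t - y))"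
  using lborel_integrable_real_affine[OF assms, of "1" "-y"] by simp

lemma bmult_integrable:
  fixes g k :: "real \<Rightarrow> complex"
  assumes g: "g \<in> borel_measurable lborel" and B: "\<And>t. norm (g t) \<le> B" and k: "integrable lborel k"
  shows "integrable lborel (\<lambda>t. g t * k t)"
proof (rule Bochner_Integration.integrable_bound[where f="\<lambda>t. of_real B * k t"])
  show "integrable lborel (\<lambda>t. complex_of_real B * k t)" using k by simp
  show "(\<lambda>t. g t * k t) \<in> borel_measurable lborel" using g k by measurable
  show "AE x in lborel. norm (g x * k x) \<le> norm (complex_of_real B * k x)"
  proof
    fix x have "norm (g x * k x) \<le> B * norm (k x)"
      unfolding norm_mult by (rule mult_right_mono[OF B]) simp
    also have "\<dots> \<le> norm (complex_of_real B * k x)" by (simp add: norm_mult mult_right_mono)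
    finally show "norm (g x * k x) \<le> norm (complex_of_real B * k x)" .
  qed
qed

definition Ag :: "(real \<Rightarrow> complex) \<Rightarrow> (real \<Rightarrow> complex) \<Rightarrow> real \<Rightarrow> complex" where
  "Ag g k x = (\<integral>t. g t * k (x - t) \<partial>lborel)"

lemma meas_test:
  fixes k g h :: "real \<Rightarrow> complex"
  assumes [measurable]: "k \<in> borel_measurable borel" "g \<in> borel_measurable borel" "h \<in> borel_measurable borel"
  shows "(\<lambda>(y,x). k (x - y) * h y) \<in> borel_measurable (lborel \<Otimes>\<^sub>M lborel)"
  by measurable

lemma meas_Ag:
  fixes k g :: "real \<Rightarrow> complex"
  assumes [measurable]: "k \<in> borel_measurable borel" "g \<in> borel_measurable borel"
  shows "Ag g k \<in> borel_measurable lborel"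
  unfolding Ag_def
  by (rule lborel.borel_measurable_lebesgue_integral[where f="\<lambda>x t. g t * k (x - t)"]) measurable


lemma conv_props:
  fixes k h :: "real \<Rightarrow> complex"
  assumes k: "integrable lborel k" and h: "integrable lborel h"
  shows "integrable lborel (conv k h)" "(\<integral>x. conv k h x \<partial>lborel) = (\<integral>x. k x \<partial>lborel) * (\<integral>x. h x \<partial>lborel)"
proof -

  have [measurable]: "k \<in> borel_measurable borel" "h \<in> borel_measurable borel"
    using k h by auto
  let ?P = "\<lambda>(y,x). k (x - y) * h y"
  have Pm: "?P \<in> borel_measurable (lborel \<Otimes>\<^sub>M lborel)" by measurable
  have inner: "(\<integral>x. norm (?P (y, x)) \<partial>lborel) = norm (h y) * (\<integral>x. norm (k x) \<partial>lborel)" for y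
  proof -
    have "(\<integral>x. norm (?P (y, x)) \<partial>lborel) = (\<integral>x. norm (k (x - y)) * norm (h y) \<partial>lborel)"
      by (simp add: norm_mult)
    also have "\<dots> = (\<integral>x. norm (k (x - y)) \<partial>lborel) * norm (h y)" by simp
    also have "\<dots> = (\<integral>x. norm (k x) \<partial>lborel) * norm (h y)"
      using shift_integral'[of "\<lambda>x. norm (k x)" y] by simp
    finally show ?thesis by simp
  qed
  have Pint: "integrable (lborel \<Otimes>\<^sub>M lborel) ?P"
  proof (rule lborel_pair.Fubini_integrable[OF Pm])
    show "integrable lborel (\<lambda>y. \<integral>x. norm (?P (y, x)) \<partial>lborel)"
      unfolding inner using h by simp
    show "AE y in lborel. integrable lborel (\<lambda>x. ?P (y, x))"
      using shift_integrable'[OF k] by simp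
  qed
  have Sint: "integrable (lborel \<Otimes>\<^sub>M lborel) (\<lambda>(x,y). ?P (y,x))"
    using lborel_pair.integrable_product_swap[OF Pint] .
  have ceq: "conv k h = (\<lambda>x. \<integral>y. (\<lambda>(x,y). ?P (y,x)) (x, y) \<partial>lborel)"
    by (auto simp: conv_def fun_eq_iff)
  show "integrable lborel (conv k h)"
    unfolding ceq by (rule lborel_pair.integrable_fst'[OF Sint])
  have "(\<integral>x. conv k h x \<partial>lborel) = integral\<^sup>L (lborel \<Otimes>\<^sub>M lborel) (\<lambda>(x,y). ?P (y,x))"
    unfolding ceq by (rule lborel_pair.integral_fst'[OF Sint])
  also have "\<dots> = integral\<^sup>L (lborel \<Otimes>\<^sub>M lborel) ?P"
    by (rule lborel_pair.integral_product_swap[OF Pm])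
  also have "\<dots> = (\<integral>y. (\<integral>x. ?P (y, x) \<partial>lborel) \<partial>lborel)"
    by (rule lborel_pair.integral_fst'[OF Pint, symmetric])
  also have "\<dots> = (\<integral>y. (\<integral>x. k x \<partial>lborel) * h y \<partial>lborel)"
  proof (rule Bochner_Integration.integral_cong[OF refl])
    fix y show "(\<integral>x. ?P (y, x) \<partial>lborel) = (\<integral>x. k x \<partial>lborel) * h y"
      using shift_integral'[of k y] by simp
  qed
  also have "\<dots> = (\<integral>x. k x \<partial>lborel) * (\<integral>x. h x \<partial>lborel)" by simp
  finally show "(\<integral>x. conv k h x \<partial>lborel) = (\<integral>x. k x \<partial>lborel) * (\<integral>x. h x \<partial>lborel)" .
qed


context
  fixes g :: "real \<Rightarrow> complex" and B :: real
  assumes gm[measurable]: "g \<in> borel_measurable borel" and gB: "\<And>t. norm (g t) \<le> B"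
begin

lemma B0: "0 \<le> B" using gB[of 0] norm_ge_zero order_trans by blast

lemma Ag_integrable:
  assumes k: "integrable lborel k"
  shows "integrable lborel (\<lambda>t. g t * k (z - t))"
  by (rule bmult_integrable[OF _ gB shift_integrable[OF k]]) simp

lemma Ag_norm_int_bound:
  assumes k: "integrable lborel k"
  shows "(\<integral>t. norm (g t * k (z - t)) \<partial>lborel) \<le> B * (\<integral>t. norm (k t) \<partial>lborel)"
proof -
  have "(\<integral>t. norm (g t * k (z - t)) \<partial>lborel) \<le> (\<integral>t. B * norm (k (z - t)) \<partial>lborel)"
  proof (rule integral_mono)
    show "integrable lborel (\<lambda>t. norm (g t * k (z - t)))"
      using Ag_integrable[OF k] by simp
    show "integrable lborel (\<lambda>t. B * norm (k (z - t)))"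
      using shift_integrable[OF k] by simp
    fix t show "norm (g t * k (z - t)) \<le> B * norm (k (z - t))"
      unfolding norm_mult by (rule mult_right_mono[OF gB]) simp
  qed
  also have "\<dots> = B * (\<integral>t. norm (k (z - t)) \<partial>lborel)" by simp
  also have "\<dots> = B * (\<integral>t. norm (k t) \<partial>lborel)"
    using shift_integral[of "\<lambda>t. norm (k t)" z] by simp
  finally show ?thesis .
qed

lemma Ag_bound:
  assumes k: "integrable lborel k"
  shows "norm (Ag g k z) \<le> B * (\<integral>t. norm (k t) \<partial>lborel)"
  unfolding Ag_def by (rule order_trans[OF integral_norm_bound Ag_norm_int_bound[OF k]])

lemma Ag_add:
  assumes "integrable lborel k1" "integrable lborel k2"
  shows "Ag g (\<lambda>t. k1 t + k2 t) z = Ag g k1 z + Ag g k2 z"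
  unfolding Ag_def distrib_left
  by (rule Bochner_Integration.integral_add[OF Ag_integrable Ag_integrable]) (use assms in auto)

lemma Ag_diff:
  assumes "integrable lborel k1" "integrable lborel k2"
  shows "Ag g (\<lambda>t. k1 t - k2 t) z = Ag g k1 z - Ag g k2 z"
  unfolding Ag_def right_diff_distrib
  by (rule Bochner_Integration.integral_diff[OF Ag_integrable Ag_integrable]) (use assms in auto)

lemma Ag_cmult:
  shows "Ag g (\<lambda>t. c * k t) z = c * Ag g k z"
proof -
  have "Ag g (\<lambda>t. c * k t) z = (\<integral>t. c * (g t * k (z - t)) \<partial>lborel)"
    unfolding Ag_def by (simp add: algebra_simps)
  also have "\<dots> = c * Ag g k z" unfolding Ag_def by simp
  finally show ?thesis .
qed

lemma Ag_conv:
  fixes k h :: "real \<Rightarrow> complex"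
  assumes k: "integrable lborel k" and h: "integrable lborel h"
  shows "Ag g (conv k h) x = (\<integral>y. Ag g k (x - y) * h y \<partial>lborel)"
proof -
  have [measurable]: "k \<in> borel_measurable borel" "h \<in> borel_measurable borel"
    using k h by auto
  let ?Q = "\<lambda>(y,t). g t * k (x - y - t) * h y"
  have Qm: "?Q \<in> borel_measurable (lborel \<Otimes>\<^sub>M lborel)" by measurable
  have Qint: "integrable (lborel \<Otimes>\<^sub>M lborel) ?Q"
  proof (rule lborel_pair.Fubini_integrable[OF Qm])
    show "integrable lborel (\<lambda>y. \<integral>t. norm (?Q (y, t)) \<partial>lborel)"
    proof (rule Bochner_Integration.integrable_bound[where f="\<lambda>y. (B * (\<integral>t. norm (k t) \<partial>lborel)) * norm (h y)"])
      show "integrable lborel (\<lambda>y. (B * (\<integral>t. norm (k t) \<partial>lborel)) * norm (h y))"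
        using h by simp
      show "(\<lambda>y. \<integral>t. norm (?Q (y, t)) \<partial>lborel) \<in> borel_measurable lborel"
        by (rule lborel.borel_measurable_lebesgue_integral[where f="\<lambda>y t. norm (?Q (y, t))"]) measurable
      show "AE y in lborel. norm (\<integral>t. norm (?Q (y, t)) \<partial>lborel) \<le> norm ((B * (\<integral>t. norm (k t) \<partial>lborel)) * norm (h y))"
      proof
        fix y
        have eq: "(\<integral>t. norm (?Q (y, t)) \<partial>lborel) = (\<integral>t. norm (g t * k (x - y - t)) \<partial>lborel) * norm (h y)"
          by (simp add: norm_mult)
        have nn: "0 \<le> (\<integral>t. norm (?Q (y, t)) \<partial>lborel)" by simp
        have "(\<integral>t. norm (g t * k (x - y - t)) \<partial>lborel) * norm (h y) \<le> (B * (\<integral>t. norm (k t) \<partial>lborel)) * norm (h y)"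
          by (rule mult_right_mono[OF Ag_norm_int_bound[OF k]]) simp
        then show "norm (\<integral>t. norm (?Q (y, t)) \<partial>lborel) \<le> norm ((B * (\<integral>t. norm (k t) \<partial>lborel)) * norm (h y))"
          using nn eq B0 by (simp add: abs_mult)
      qed
    qed
    show "AE y in lborel. integrable lborel (\<lambda>t. ?Q (y, t))"
      using Ag_integrable[OF k, of "x - _"] by simp
  qed
  have Sint: "integrable (lborel \<Otimes>\<^sub>M lborel) (\<lambda>(t,y). ?Q (y,t))"
    using lborel_pair.integrable_product_swap[OF Qint] .
  have "Ag g (conv k h) x = (\<integral>t. (\<integral>y. (\<lambda>(t,y). ?Q (y,t)) (t, y) \<partial>lborel) \<partial>lborel)"
    unfolding Ag_def
  proof (rule Bochner_Integration.integral_cong[OF refl])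
    fix t
    have "g t * conv k h (x - t) = (\<integral>y. g t * (k (x - t - y) * h y) \<partial>lborel)"
      unfolding conv_def by simp
    also have "\<dots> = (\<integral>y. (\<lambda>(t,y). ?Q (y,t)) (t, y) \<partial>lborel)"
      by (simp add: algebra_simps)
    finally show "g t * conv k h (x - t) = (\<integral>y. (\<lambda>(t,y). ?Q (y,t)) (t, y) \<partial>lborel)" .
  qed
  also have "\<dots> = integral\<^sup>L (lborel \<Otimes>\<^sub>M lborel) (\<lambda>(t,y). ?Q (y,t))"
    by (rule lborel_pair.integral_fst'[OF Sint])
  also have "\<dots> = integral\<^sup>L (lborel \<Otimes>\<^sub>M lborel) ?Q"
    by (rule lborel_pair.integral_product_swap[OF Qm])
  also have "\<dots> = (\<integral>y. (\<integral>t. ?Q (y, t) \<partial>lborel) \<partial>lborel)"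
    by (rule lborel_pair.integral_fst'[OF Qint, symmetric])
  also have "\<dots> = (\<integral>y. Ag g k (x - y) * h y \<partial>lborel)"
  proof (rule Bochner_Integration.integral_cong[OF refl])
    fix y show "(\<integral>t. ?Q (y, t) \<partial>lborel) = Ag g k (x - y) * h y"
      unfolding Ag_def by simp
  qed
  finally show ?thesis .
qed

lemma Ag_conv_lim:
  fixes k h :: "real \<Rightarrow> complex"
  assumes k: "integrable lborel k" and h: "integrable lborel h"
    and lim: "(Ag g k \<longlongrightarrow> c) at_top"
  shows "((\<lambda>x. \<integral>y. Ag g k (x - y) * h y \<partial>lborel) \<longlongrightarrow> c * (\<integral>y. h y \<partial>lborel)) at_top"
proof (rule tendsto_at_topI_sequentially)
  have [measurable]: "k \<in> borel_measurable borel" "h \<in> borel_measurable borel"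
    using k h by auto
  have Am[measurable]: "Ag g k \<in> borel_measurable borel"
    using meas_Ag[of k g] by simp
  fix X :: "nat \<Rightarrow> real" assume X: "filterlim X at_top sequentially"
  have "(\<lambda>n. \<integral>y. Ag g k (X n - y) * h y \<partial>lborel) \<longlonglongrightarrow> (\<integral>y. c * h y \<partial>lborel)"
  proof (rule integral_dominated_convergence[where w="\<lambda>y. (B * (\<integral>t. norm (k t) \<partial>lborel)) * norm (h y)"])
    show "(\<lambda>y. c * h y) \<in> borel_measurable lborel" by measurable
    show "(\<lambda>y. Ag g k (X n - y) * h y) \<in> borel_measurable lborel" for n by measurable
    show "integrable lborel (\<lambda>y. (B * (\<integral>t. norm (k t) \<partial>lborel)) * norm (h y))"
      using h by simp
    show "AE y in lborel. (\<lambda>n. Ag g k (X n - y) * h y) \<longlonglongrightarrow> c * h y"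
    proof
      fix y
      have "filterlim (\<lambda>n. - y + X n) at_top sequentially"
        by (rule filterlim_tendsto_add_at_top[OF tendsto_const X])
      then have "filterlim (\<lambda>n. X n - y) at_top sequentially" by simp
      from filterlim_compose[OF lim this]
      show "(\<lambda>n. Ag g k (X n - y) * h y) \<longlonglongrightarrow> c * h y"
        by (intro tendsto_mult tendsto_const)
    qed
    show "AE y in lborel. norm (Ag g k (X n - y) * h y) \<le> (B * (\<integral>t. norm (k t) \<partial>lborel)) * norm (h y)" for n
    proof
      fix y show "norm (Ag g k (X n - y) * h y) \<le> (B * (\<integral>t. norm (k t) \<partial>lborel)) * norm (h y)"
        unfolding norm_mult by (rule mult_right_mono[OF Ag_bound[OF k]]) simp
    qed
  qed
  then show "(\<lambda>n. \<integral>y. Ag g k (X n - y) * h y \<partial>lborel) \<longlonglongrightarrow> c * (\<integral>y. h y \<partial>lborel)"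
    by simp
qed


lemma J_ideal:
  "is_closed_ideal {k. integrable lborel k \<and> (Ag g k \<longlongrightarrow> L * (\<integral>x. k x \<partial>lborel)) at_top}"
  (is "is_closed_ideal ?J")
  unfolding is_closed_ideal_def
proof (intro conjI ballI allI impI)
  fix f assume "f \<in> ?J" then show "integrable lborel f" by simp
next
  fix f k assume f: "f \<in> ?J" and k: "k \<in> ?J"
  have fi: "integrable lborel f" and ki: "integrable lborel k" using f k by auto
  have "((\<lambda>z. Ag g f z + Ag g k z) \<longlongrightarrow> L * (\<integral>x. f x \<partial>lborel) + L * (\<integral>x. k x \<partial>lborel)) at_top"
    using f k by (auto intro: tendsto_add)
  moreover have "Ag g (\<lambda>x. f x + k x) = (\<lambda>z. Ag g f z + Ag g k z)"
    using Ag_add[OF fi ki] by auto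
  moreover have "(\<integral>x. f x + k x \<partial>lborel) = (\<integral>x. f x \<partial>lborel) + (\<integral>x. k x \<partial>lborel)"
    using fi ki by simp
  ultimately show "(\<lambda>x. f x + k x) \<in> ?J" using fi ki by (simp add: distrib_left)
next
  fix f and c :: complex assume f: "f \<in> ?J"
  have fi: "integrable lborel f" using f by auto
  have "((\<lambda>z. c * Ag g f z) \<longlongrightarrow> c * (L * (\<integral>x. f x \<partial>lborel))) at_top"
    using f by (auto intro: tendsto_mult tendsto_const)
  moreover have "Ag g (\<lambda>x. c * f x) = (\<lambda>z. c * Ag g f z)"
    using Ag_cmult by auto
  ultimately show "(\<lambda>x. c * f x) \<in> ?J" using fi by (simp add: algebra_simps)
next
  fix f and h :: "real \<Rightarrow> complex" assume f: "f \<in> ?J" and h: "integrable lborel h"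
  have fi: "integrable lborel f" and lim: "(Ag g f \<longlongrightarrow> L * (\<integral>x. f x \<partial>lborel)) at_top" using f by auto
  have "Ag g (conv f h) = (\<lambda>x. \<integral>y. Ag g f (x - y) * h y \<partial>lborel)"
    using Ag_conv[OF fi h] by auto
  with Ag_conv_lim[OF fi h lim] conv_props[OF fi h]
  show "conv f h \<in> ?J" by (simp add: algebra_simps)
next
  fix F :: "nat \<Rightarrow> real \<Rightarrow> complex" and f :: "real \<Rightarrow> complex"
  assume as: "(\<forall>n. F n \<in> ?J) \<and> integrable lborel f \<and> (\<lambda>n. L1_dist (F n) f) \<longlonglongrightarrow> 0"
  then have FJ: "\<And>n. integrable lborel (F n)" "\<And>n. (Ag g (F n) \<longlongrightarrow> L * (\<integral>x. F n x \<partial>lborel)) at_top"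
    and fi: "integrable lborel f" and D: "(\<lambda>n. L1_dist (F n) f) \<longlonglongrightarrow> 0" by auto
  have "(Ag g f \<longlongrightarrow> L * (\<integral>x. f x \<partial>lborel)) at_top"
  proof (rule tendstoI)
    fix e :: real assume e: "0 < e"
    have "(\<lambda>n. (B + norm L) * L1_dist (F n) f) \<longlonglongrightarrow> (B + norm L) * 0"
      by (intro tendsto_mult tendsto_const D)
    then have "eventually (\<lambda>n. (B + norm L) * L1_dist (F n) f < e / 2) sequentially"
      using e by (intro order_tendstoD(2)) auto
    then obtain n where n: "(B + norm L) * L1_dist (F n) f < e / 2"
      using eventually_sequentially by auto
    have ev: "eventually (\<lambda>x. dist (Ag g (F n) x) (L * (\<integral>x. F n x \<partial>lborel)) < e / 2) at_top"
      using e by (intro tendstoD[OF FJ(2)[of n]]) auto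
    show "eventually (\<lambda>x. dist (Ag g f x) (L * (\<integral>x. f x \<partial>lborel)) < e) at_top"
      using ev
    proof eventually_elim
      case (elim x)
      have d1: "norm (Ag g f x - Ag g (F n) x) \<le> B * L1_dist (F n) f"
      proof -
        have "norm (Ag g f x - Ag g (F n) x) = norm (Ag g (\<lambda>t. F n t - f t) x)"
          using Ag_diff[OF FJ(1)[of n] fi] by (simp add: norm_minus_commute)
        also have "\<dots> \<le> B * (\<integral>t. norm (F n t - f t) \<partial>lborel)"
          by (rule Ag_bound) (use FJ(1) fi in auto)
        finally show ?thesis unfolding L1_dist_def .
      qed
      have d2: "norm ((\<integral>x. F n x \<partial>lborel) - (\<integral>x. f x \<partial>lborel)) \<le> L1_dist (F n) f"
      proof -
        have "(\<integral>x. F n x \<partial>lborel) - (\<integral>x. f x \<partial>lborel) = (\<integral>x. F n x - f x \<partial>lborel)"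
          using FJ(1)[of n] fi by simp
        then show ?thesis unfolding L1_dist_def using integral_norm_bound by metis
      qed
      have d3: "norm (L * (\<integral>x. F n x \<partial>lborel) - L * (\<integral>x. f x \<partial>lborel)) \<le> norm L * L1_dist (F n) f"
        unfolding right_diff_distrib[symmetric] norm_mult by (rule mult_left_mono[OF d2]) simp
      have "dist (Ag g f x) (L * (\<integral>x. f x \<partial>lborel)) \<le>
          norm (Ag g f x - Ag g (F n) x) + dist (Ag g (F n) x) (L * (\<integral>x. F n x \<partial>lborel))
          + norm (L * (\<integral>x. F n x \<partial>lborel) - L * (\<integral>x. f x \<partial>lborel))"
        unfolding dist_norm by (rule order_trans[OF _ add_mono[OF norm_triangle_ineq order_refl]], rule order_trans[OF _ norm_triangle_ineq]) (simp add: algebra_simps)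
      also have "\<dots> < B * L1_dist (F n) f + e / 2 + norm L * L1_dist (F n) f"
        using d1 d3 elim by linarith
      also have "\<dots> < e" using n by (simp add: algebra_simps)
      finally show ?case .
    qed
  qed
  then show "f \<in> ?J" using fi by simp
qed
end

lemma ext0_eq: "ext0 \<psi> = (\<lambda>x. indicator {0..} x *\<^sub>R \<psi> x)"
  by (auto simp: ext0_def fun_eq_iff indicator_def)

lemma summ_ext0:
  "(\<lambda>x. LINT t:{0..x}|lborel. f t * \<psi> (x - t)) = (\<lambda>x. LINT t:{0..}|lborel. f t * ext0 \<psi> (x - t))"
proof
  fix x
  show "(LINT t:{0..x}|lborel. f t * \<psi> (x - t)) = (LINT t:{0..}|lborel. f t * ext0 \<psi> (x - t))"
    unfolding set_lebesgue_integral_def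
    by (rule arg_cong[where f="integral\<^sup>L lborel"]) (auto simp: fun_eq_iff ext0_def indicator_def)
qed

theorem theorem3p3:
  fixes \<phi> \<phi>' :: "real \<Rightarrow> complex"
  assumes "set_integrable lborel {0..} \<phi>"
    and "set_integrable lborel {0..} \<phi>'"
    and "(LINT t:{0..}|lborel. \<phi> t) = 1"
    and "(LINT t:{0..}|lborel. \<phi>' t) = 1"
    and "closed_ideal_gen (ext0 \<phi>) \<subseteq> closed_ideal_gen (ext0 \<phi>')"
  shows "stronger \<phi> \<phi>'"
  unfolding stronger_def
proof (intro ballI allI impI)
  fix f L assume fL: "f \<in> Linf_pos" and s': "summ \<phi>' f L"
  from fL have fm: "f \<in> borel_measurable lborel" and "\<exists>B. AE x in lborel. 0 \<le> x \<longrightarrow> norm (f x) \<le> B"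
    unfolding Linf_pos_def by auto
  then obtain B0 where B0: "AE x in lborel. 0 \<le> x \<longrightarrow> norm (f x) \<le> B0" by auto
  define B where "B = max B0 0"
  define g where "g t = (if 0 \<le> t \<and> norm (f t) \<le> B then f t else 0)" for t
  have fm'[measurable]: "f \<in> borel_measurable borel" using fm by simp
  have gm: "g \<in> borel_measurable borel" unfolding g_def by measurable
  have gB: "\<And>t. norm (g t) \<le> B" unfolding g_def B_def by auto
  have int1: "integrable lborel (ext0 \<phi>)" "integrable lborel (ext0 \<phi>')"
    using assms(1,2) unfolding set_integrable_def ext0_eq by auto
  have ints: "(\<integral>x. ext0 \<phi> x \<partial>lborel) = 1" "(\<integral>x. ext0 \<phi>' x \<partial>lborel) = 1"
    using assms(3,4) unfolding set_lebesgue_integral_def ext0_eq by auto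
  have key: "summ \<psi> f L \<longleftrightarrow> (Ag g (ext0 \<psi>) \<longlongrightarrow> L) at_top"
    if km: "integrable lborel (ext0 \<psi>)" for \<psi>
  proof -
    have [measurable]: "ext0 \<psi> \<in> borel_measurable borel" using km by auto
    have "(LINT t:{0..}|lborel. f t * ext0 \<psi> (x - t)) = Ag g (ext0 \<psi>) x" for x
      unfolding set_lebesgue_integral_def Ag_def
    proof (rule integral_cong_AE)
      show "(\<lambda>t. indicat_real {0..} t *\<^sub>R (f t * ext0 \<psi> (x - t))) \<in> borel_measurable lborel"
        by measurable
      show "(\<lambda>t. g t * ext0 \<psi> (x - t)) \<in> borel_measurable lborel"
        using gm by measurable
      show "AE t in lborel. indicat_real {0..} t *\<^sub>R (f t * ext0 \<psi> (x - t)) = g t * ext0 \<psi> (x - t)"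
        using B0 by eventually_elim (auto simp: g_def B_def indicator_def)
    qed
    then show ?thesis unfolding summ_def summ_ext0 by simp
  qed
  let ?J = "{k. integrable lborel k \<and> (Ag g k \<longlongrightarrow> L * (\<integral>x. k x \<partial>lborel)) at_top}"
  have J: "is_closed_ideal ?J" by (rule J_ideal[OF gm gB])
  have "ext0 \<phi>' \<in> ?J" using int1(2) ints(2) s' key[OF int1(2)] by simp
  with J have "closed_ideal_gen (ext0 \<phi>') \<subseteq> ?J" unfolding closed_ideal_gen_def by blast
  moreover have "ext0 \<phi> \<in> closed_ideal_gen (ext0 \<phi>)" unfolding closed_ideal_gen_def by blast
  ultimately have "ext0 \<phi> \<in> ?J" using assms(5) by blast
  then show "summ \<phi> f L" using key[OF int1(1)] ints(1) by simp
qed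

end
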